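(* Let $\mathcal{G}=sl(2,\mathbb{R})$ be the real Lie algebra with basis $X_1,X_2,X_3$ and brackets $[X_1,X_2]=-X_3$, $[X_2,X_3]=X_1$, $[X_3,X_1]=X_2$ (Bianchi type $VIII$). Every real Manin triple $(\mathcal{D},\mathcal{G}',\tilde{\mathcal{G}}')$ with $\mathcal{G}'\cong\mathcal{G}$ is isomorphic to exactly one Manin triple $(\mathcal{D},\mathcal{G},\tilde{\mathcal{G}})$ in which $\tilde{\mathcal{G}}$, in the basis $\tilde X^1,\tilde X^2,\tilde X^3$ dual to $X_1,X_2,X_3$, has one of the following bracket structures: (a) (Bianchi $I$) all brackets zero; (b) (Bianchi $V$) (i) $[\tilde X^1,\tilde X^2]=-b\tilde X^2$, $[\tilde X^2,\tilde X^3]=0$, $[\tilde X^3,\tilde X^1]=b\tilde X^3$, $b>0$; (ii) $[\tilde X^1,\tilde X^2]=0$, $[\tilde X^2,\tilde X^3]=b\tilde X^2$, $[\tilde X^3,\tilde X^1]=-b\tilde X^1$, $b>0$; (iii) $[\tilde X^1,\tilde X^2]=\tilde X^2$, $[\tilde X^2,\tilde X^3]=\tilde X^2$, $[\tilde X^3,\tilde X^1]=-(\tilde X^1+\tilde X^3)$.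
   Context: A real Manin triple $(\mathcal{D},\mathcal{G},\tilde{\mathcal{G}})$ consists of a real Lie algebra $\mathcal{D}$ with a symmetric, ad-invariant, nondegenerate bilinear form $\langle\cdot,\cdot\rangle$, and two maximally isotropic Lie subalgebras $\mathcal{G},\tilde{\mathcal{G}}$ with $\mathcal{D}=\mathcal{G}\oplus\tilde{\mathcal{G}}$ as vector spaces; here $\dim\mathcal{D}=6$, $\dim\mathcal{G}=\dim\tilde{\mathcal{G}}=3$. Bases $X_i$ of $\mathcal{G}$ and $\tilde X^i$ of $\tilde{\mathcal{G}}$ are dual if $\langle X_i,X_j\rangle=0$, $\langle X_i,\tilde X^j\rangle=\delta_i^j$, $\langle\tilde X^i,\tilde X^j\rangle=0$. If $[X_i,X_j]=f_{ij}{}^kX_k$ and $[\tilde X^i,\tilde X^j]=\tilde f^{ij}{}_k\tilde X^k$, ad-invariance forces $[X_i,\tilde X^j]=f_{ki}{}^j\tilde X^k+\tilde f^{jk}{}_iX_k$, so the triple is determined by the brackets of $\mathcal{G}$ and $\tilde{\mathcal{G}}$ in dual bases. Two Manin triples are isomorphic if there is a Lie algebra isomorphism of the doubles preserving the bilinear forms and mapping first subalgebra to first subalgebra and second to second; equivalently, they are related by a change of basis $X_i'=X_kA^k{}_i$, $\tilde X'^j=(A^{-1})^j{}_k\tilde X^k$. Different values of the parameter $b$ give non-isomorphic triples. *)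

theory Defs
  imports Complex_Main "HOL-Library.Numeral_Type" "HOL-Library.Product_Plus" "HOL-Library.Function_Algebras"
begin

text \<open>Indices 0,1,2 of type 3 correspond to the paper's indices 1,2,3.
  A 3-dimensional real Lie bracket in a basis is given by structure constants
  c i j k, meaning [E_i, E_j] = sum_k c i j k E_k.\<close>

type_synonym sconst = "3 \<Rightarrow> 3 \<Rightarrow> 3 \<Rightarrow> real"
type_synonym vec3 = "3 \<Rightarrow> real"

definition v3 :: "real \<Rightarrow> real \<Rightarrow> real \<Rightarrow> vec3" where
  "v3 a b c = (\<lambda>k. if k = 0 then a else if k = 1 then b else c)"

definition brackets3 :: "vec3 \<Rightarrow> vec3 \<Rightarrow> vec3 \<Rightarrow> sconst" where
  "brackets3 b12 b23 b31 = (\<lambda>i j k.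
     if i = 0 \<and> j = 1 then b12 k else if i = 1 \<and> j = 0 then - b12 k
     else if i = 1 \<and> j = 2 then b23 k else if i = 2 \<and> j = 1 then - b23 k
     else if i = 2 \<and> j = 0 then b31 k else if i = 0 \<and> j = 2 then - b31 k
     else 0)"

definition sl2 :: sconst where
  "sl2 = brackets3 (v3 0 0 (-1)) (v3 1 0 0) (v3 0 1 0)"

text \<open>The Manin double D = G + G~, elements (x, xi) = sum x_i X_i + sum xi_i X~^i.
  [X_i,X_j] = f_ij^k X_k, [X~^i,X~^j] = ft^ij_k X~^k,
  [X_i,X~^j] = f_ki^j X~^k + ft^jk_i X_k.\<close>
definition dbl_bracket :: "sconst \<Rightarrow> sconst \<Rightarrow> vec3 \<times> vec3 \<Rightarrow> vec3 \<times> vec3 \<Rightarrow> vec3 \<times> vec3" where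
  "dbl_bracket f ft a b = (case a of (x, \<xi>) \<Rightarrow> case b of (y, \<eta>) \<Rightarrow>
     ((\<lambda>k. (\<Sum>i\<in>UNIV. \<Sum>j\<in>UNIV. x i * y j * f i j k)
          + (\<Sum>i\<in>UNIV. \<Sum>j\<in>UNIV. x i * \<eta> j * ft j k i)
          - (\<Sum>i\<in>UNIV. \<Sum>j\<in>UNIV. y i * \<xi> j * ft j k i)),
      (\<lambda>k. (\<Sum>i\<in>UNIV. \<Sum>j\<in>UNIV. \<xi> i * \<eta> j * ft i j k)
          + (\<Sum>i\<in>UNIV. \<Sum>j\<in>UNIV. x i * \<eta> j * f k i j)
          - (\<Sum>i\<in>UNIV. \<Sum>j\<in>UNIV. y i * \<xi> j * f k i j))))"

definition dbl_form :: "vec3 \<times> vec3 \<Rightarrow> vec3 \<times> vec3 \<Rightarrow> real" where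
  "dbl_form a b = (case a of (x, \<xi>) \<Rightarrow> case b of (y, \<eta>) \<Rightarrow>
     (\<Sum>i\<in>UNIV. x i * \<eta> i + \<xi> i * y i))"

text \<open>(f, ft) in dual bases define a Manin triple: the bracket on the double
  (bilinear by construction) is antisymmetric, satisfies Jacobi, and the form
  is ad-invariant. G and G~ are then isotropic subalgebras.\<close>
definition manin_triple :: "sconst \<Rightarrow> sconst \<Rightarrow> bool" where
  "manin_triple f ft \<longleftrightarrow>
     (\<forall>a b. dbl_bracket f ft a b = - dbl_bracket f ft b a) \<and>
     (\<forall>a b c. dbl_bracket f ft a (dbl_bracket f ft b c)
              + dbl_bracket f ft b (dbl_bracket f ft c a)
              + dbl_bracket f ft c (dbl_bracket f ft a b) = 0) \<and>
     (\<forall>a b c. dbl_form (dbl_bracket f ft a b) c = dbl_form a (dbl_bracket f ft b c))"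

definition inverse_pair :: "(3 \<Rightarrow> 3 \<Rightarrow> real) \<Rightarrow> (3 \<Rightarrow> 3 \<Rightarrow> real) \<Rightarrow> bool" where
  "inverse_pair A B \<longleftrightarrow>
     (\<forall>i j. (\<Sum>k\<in>UNIV. A i k * B k j) = (if i = j then 1 else 0)) \<and>
     (\<forall>i j. (\<Sum>k\<in>UNIV. B i k * A k j) = (if i = j then 1 else 0))"

text \<open>Change of basis X'_i = X_k A^k_i (A i j = A^i_j), B = A^{-1}:
  new structure constants of G and of the dual G~ (X~'^j = (A^{-1})^j_k X~^k).\<close>
definition trans_f :: "(3 \<Rightarrow> 3 \<Rightarrow> real) \<Rightarrow> (3 \<Rightarrow> 3 \<Rightarrow> real) \<Rightarrow> sconst \<Rightarrow> sconst" where
  "trans_f A B f = (\<lambda>i j n. \<Sum>k\<in>UNIV. \<Sum>l\<in>UNIV. \<Sum>m\<in>UNIV. A k i * A l j * f k l m * B n m)"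

definition trans_ft :: "(3 \<Rightarrow> 3 \<Rightarrow> real) \<Rightarrow> (3 \<Rightarrow> 3 \<Rightarrow> real) \<Rightarrow> sconst \<Rightarrow> sconst" where
  "trans_ft A B ft = (\<lambda>i j n. \<Sum>k\<in>UNIV. \<Sum>l\<in>UNIV. \<Sum>m\<in>UNIV. B i k * B j l * ft k l m * A m n)"

definition lie_iso :: "sconst \<Rightarrow> sconst \<Rightarrow> bool" where
  "lie_iso f g \<longleftrightarrow> (\<exists>A B. inverse_pair A B \<and> trans_f A B f = g)"

definition mt_iso :: "sconst \<Rightarrow> sconst \<Rightarrow> sconst \<Rightarrow> sconst \<Rightarrow> bool" where
  "mt_iso f ft g gt \<longleftrightarrow>
     (\<exists>A B. inverse_pair A B \<and> trans_f A B f = g \<and> trans_ft A B ft = gt)"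

definition bianchiI :: sconst where "bianchiI = (\<lambda>i j k. 0)"

definition bianchiV_i :: "real \<Rightarrow> sconst" where
  "bianchiV_i b = brackets3 (v3 0 (-b) 0) (v3 0 0 0) (v3 0 0 b)"

definition bianchiV_ii :: "real \<Rightarrow> sconst" where
  "bianchiV_ii b = brackets3 (v3 0 0 0) (v3 0 b 0) (v3 (-b) 0 0)"

definition bianchiV_iii :: sconst where
  "bianchiV_iii = brackets3 (v3 0 1 0) (v3 0 1 0) (v3 (-1) 0 (-1))"

definition canonical_dual :: "sconst \<Rightarrow> bool" where
  "canonical_dual ft \<longleftrightarrow> ft = bianchiI \<or> (\<exists>b>0. ft = bianchiV_i b)
     \<or> (\<exists>b>0. ft = bianchiV_ii b) \<or> ft = bianchiV_iii"

end

theory Submission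
  imports Defs
begin


lemma ex3: fixes x :: 3 shows "x = 0 \<or> x = 1 \<or> x = 2"
proof (induct x)
  case (of_int z)
  then have "z = 0 \<or> z = 1 \<or> z = 2" by fastforce
  then show ?case by auto
qed

lemma UNIV3: "(UNIV::3 set) = {0,1,2}" using ex3 by auto

lemma s3: "sum g (UNIV::3 set) = g 0 + g 1 + g 2"
  unfolding UNIV3 by (simp add: ac_simps)

lemma all3: "(\<forall>i::3. P i) \<longleftrightarrow> P 0 \<and> P 1 \<and> P 2" by (metis ex3)

definition phi :: "(3 \<Rightarrow> 3 \<Rightarrow> real) \<Rightarrow> (3 \<Rightarrow> 3 \<Rightarrow> real) \<Rightarrow> vec3 \<times> vec3 \<Rightarrow> vec3 \<times> vec3" where
  "phi A B a = (case a of (x, \<xi>) \<Rightarrow> ((\<lambda>k. \<Sum>i\<in>UNIV. A k i * x i), (\<lambda>k. \<Sum>j\<in>UNIV. B j k * \<xi> j)))"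

lemma L1: "(\<Sum>i\<in>UNIV. \<Sum>j\<in>UNIV. x i * y j * trans_f A B f i j n)
  = (\<Sum>m\<in>UNIV. B n m * (\<Sum>i\<in>UNIV. \<Sum>j\<in>UNIV. (\<Sum>k\<in>UNIV. A i k * x k) * (\<Sum>k\<in>UNIV. A j k * y k) * f i j m))"
  unfolding trans_f_def by (simp add: s3 algebra_simps)

lemma L2: "(\<Sum>i\<in>UNIV. \<Sum>j\<in>UNIV. x i * \<eta> j * trans_ft A B ft j n i)
  = (\<Sum>m\<in>UNIV. B n m * (\<Sum>i\<in>UNIV. \<Sum>j\<in>UNIV. (\<Sum>k\<in>UNIV. A i k * x k) * (\<Sum>k\<in>UNIV. B k j * \<eta> k) * ft j m i))"
  unfolding trans_ft_def by (simp add: s3 algebra_simps)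

lemma L3: "(\<Sum>i\<in>UNIV. \<Sum>j\<in>UNIV. \<xi> i * \<eta> j * trans_ft A B ft i j n)
  = (\<Sum>m\<in>UNIV. A m n * (\<Sum>i\<in>UNIV. \<Sum>j\<in>UNIV. (\<Sum>k\<in>UNIV. B k i * \<xi> k) * (\<Sum>k\<in>UNIV. B k j * \<eta> k) * ft i j m))"
  unfolding trans_ft_def by (simp add: s3 algebra_simps)

lemma L4: "(\<Sum>i\<in>UNIV. \<Sum>j\<in>UNIV. x i * \<eta> j * trans_f A B f n i j)
  = (\<Sum>m\<in>UNIV. A m n * (\<Sum>i\<in>UNIV. \<Sum>j\<in>UNIV. (\<Sum>k\<in>UNIV. A i k * x k) * (\<Sum>k\<in>UNIV. B k j * \<eta> k) * f m i j))"
  unfolding trans_f_def by (simp add: s3 algebra_simps)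

lemma Tbr: "dbl_bracket (trans_f A B f) (trans_ft A B ft) (x,\<xi>) (y,\<eta>)
   = phi B A (dbl_bracket f ft (phi A B (x,\<xi>)) (phi A B (y,\<eta>)))"
  unfolding dbl_bracket_def phi_def prod.case
  apply (simp only: L1 L2 L3 L4)
  apply (simp only: ring_distribs sum.distrib sum_subtractf)
  done

lemma Tbr': "dbl_bracket (trans_f A B f) (trans_ft A B ft) a b
   = phi B A (dbl_bracket f ft (phi A B a) (phi A B b))"
  using Tbr by (cases a, cases b) auto

lemma inv_sym: "inverse_pair A B \<Longrightarrow> inverse_pair B A"
  unfolding inverse_pair_def by blast

lemma delta_sum: "(\<Sum>m\<in>UNIV. (if k = m then 1 else 0) * (u m::real)) = u (k::3)"
  using ex3[of k] by (auto simp: s3)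

lemma delta_sum': "(\<Sum>m\<in>UNIV. (if m = k then 1 else 0) * (u m::real)) = u (k::3)"
  using ex3[of k] by (auto simp: s3)

lemma rearr1: fixes A B :: "3 \<Rightarrow> 3 \<Rightarrow> real" shows "(\<Sum>i\<in>UNIV. A k i * (\<Sum>m\<in>UNIV. B i m * u m)) = (\<Sum>m\<in>UNIV. (\<Sum>i\<in>UNIV. A k i * B i m) * (u m::real))"
  by (simp add: s3 algebra_simps)

lemma rearr2: fixes A B :: "3 \<Rightarrow> 3 \<Rightarrow> real" shows "(\<Sum>j\<in>UNIV. B j k * (\<Sum>m\<in>UNIV. A m j * u m)) = (\<Sum>m\<in>UNIV. (\<Sum>j\<in>UNIV. A m j * B j k) * (u m::real))"
  by (simp add: s3 algebra_simps)

lemma phi_inv: "inverse_pair A B \<Longrightarrow> phi A B (phi B A v) = v"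
  unfolding phi_def
  by (cases v) (simp add: rearr1 rearr2 inverse_pair_def delta_sum delta_sum')

lemma phi_add: "phi A B (u + v) = phi A B u + phi A B v"
  by (cases u, cases v) (simp add: phi_def plus_fun_def ring_distribs sum.distrib)

lemma phi_uminus: "phi A B (- u) = - phi A B u"
  by (cases u) (simp add: phi_def fun_Compl_def sum_negf)

lemma phi_zero: "phi A B 0 = 0"
  by (simp add: phi_def zero_fun_def zero_prod_def)

lemma form_phi: "dbl_form (phi B A u) c = dbl_form u (phi A B c)"
  apply (cases u, cases c)
  by (simp add: phi_def dbl_form_def s3 algebra_simps)

lemma form_sym: "dbl_form a b = dbl_form b a"
  by (cases a, cases b) (simp add: dbl_form_def mult_ac add_ac)

lemma mt_transfer:
  assumes mt: "manin_triple f ft" and ip: "inverse_pair A B"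
  shows "manin_triple (trans_f A B f) (trans_ft A B ft)"
proof -
  let ?b = "dbl_bracket f ft" and ?b2 = "dbl_bracket (trans_f A B f) (trans_ft A B ft)"
  let ?p = "phi A B" and ?q = "phi B A"
  have as: "\<And>a b. ?b a b = - ?b b a" and ja: "\<And>a b c. ?b a (?b b c) + ?b b (?b c a) + ?b c (?b a b) = 0"
    and fo: "\<And>a b c. dbl_form (?b a b) c = dbl_form a (?b b c)"
    using mt unfolding manin_triple_def by blast+
  have pq: "\<And>v. ?p (?q v) = v" using phi_inv[OF ip] .
  have A1: "?b2 a b = - ?b2 b a" for a b
    unfolding Tbr' using as phi_uminus by metis
  have A2: "?b2 a (?b2 b c) + ?b2 b (?b2 c a) + ?b2 c (?b2 a b) = 0" for a b c
  proof -
    have "?b2 a (?b2 b c) + ?b2 b (?b2 c a) + ?b2 c (?b2 a b)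
      = ?q (?b (?p a) (?b (?p b) (?p c)) + ?b (?p b) (?b (?p c) (?p a)) + ?b (?p c) (?b (?p a) (?p b)))"
      unfolding Tbr' pq phi_add ..
    also have "\<dots> = 0" using ja phi_zero by metis
    finally show ?thesis .
  qed
  have A3: "dbl_form (?b2 a b) c = dbl_form a (?b2 b c)" for a b c
  proof -
    have "dbl_form (?b2 a b) c = dbl_form (?b (?p a) (?p b)) (?p c)" unfolding Tbr' form_phi ..
    also have "\<dots> = dbl_form (?p a) (?b (?p b) (?p c))" using fo .
    also have "\<dots> = dbl_form a (?b2 b c)" unfolding Tbr' using form_phi form_sym by metis
    finally show ?thesis .
  qed
  show ?thesis unfolding manin_triple_def using A1 A2 A3 by blast
qed



definition E :: "3 \<Rightarrow> vec3" where "E i = (\<lambda>k. if k = i then 1 else 0)"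

definition cob :: "real \<Rightarrow> real \<Rightarrow> real \<Rightarrow> sconst" where
  "cob p0 p1 p2 = brackets3 (v3 (-p1) p0 0) (v3 0 (-p2) p1) (v3 p2 0 (-p0))"

lemma asym_g:
  assumes "\<And>a b. dbl_bracket f g a b = - dbl_bracket f g b a"
  shows "g i j k = - g j i k"
proof -
  have "snd (dbl_bracket f g (0, E i) (0, E j)) k = snd (- dbl_bracket f g (0, E j) (0, E i)) k"
    using assms by metis
  then show ?thesis using ex3[of i] ex3[of j]
    by (auto simp add: dbl_bracket_def E_def s3)
qed

lemma cocycle:
  assumes "manin_triple sl2 g"
  shows "g = cob (- g 2 0 2) (g 1 2 2) (g 2 0 0)"
proof -
  have AS: "\<And>a b. dbl_bracket sl2 g a b = - dbl_bracket sl2 g b a"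
    using assms unfolding manin_triple_def by blast
  have as: "g i j k = - g j i k" for i j k using asym_g[OF AS] .
  define b12 where "b12 = g 0 1"
  define b23 where "b23 = g 1 2"
  define b31 where "b31 = g 2 0"
  have gb: "g = brackets3 b12 b23 b31"
  proof (intro ext)
    fix i j k :: 3
    show "g i j k = brackets3 b12 b23 b31 i j k"
      using ex3[of i] ex3[of j] as[of i j k] as[of 0 1 k] as[of 1 2 k] as[of 2 0 k]
      unfolding brackets3_def b12_def b23_def b31_def by auto
  qed
  have JA: "\<And>a b c. dbl_bracket sl2 (brackets3 b12 b23 b31) a (dbl_bracket sl2 (brackets3 b12 b23 b31) b c) + dbl_bracket sl2 (brackets3 b12 b23 b31) b (dbl_bracket sl2 (brackets3 b12 b23 b31) c a) + dbl_bracket sl2 (brackets3 b12 b23 b31) c (dbl_bracket sl2 (brackets3 b12 b23 b31) a b) = 0"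
    using assms unfolding manin_triple_def gb by blast
  note J = arg_cong[where f="\<lambda>z. fst z _", OF JA[of "(E _, 0)" "(E _, 0)" "(0, E _)"]]
  have J1: "b12 1 + b31 2 = 0" using J[of 2 0 0 1]
    by (simp add: dbl_bracket_def s3 E_def sl2_def brackets3_def v3_def)
  have J2: "b12 0 + b23 2 = 0" using J[of 1 0 1 2]
    by (simp add: dbl_bracket_def s3 E_def sl2_def brackets3_def v3_def)
  have J3: "b23 1 + b31 0 = 0" using J[of 2 0 1 2]
    by (simp add: dbl_bracket_def s3 E_def sl2_def brackets3_def v3_def)
  have J4: "b12 2 + b23 0 + b31 1 = 0" using J[of 1 0 0 1]
    by (simp add: dbl_bracket_def s3 E_def sl2_def brackets3_def v3_def)
  have J5: "b12 2 - b23 0 + b31 1 = 0" using J[of 2 0 0 2]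
    by (simp add: dbl_bracket_def s3 E_def sl2_def brackets3_def v3_def)
  have J6: "b12 2 + b23 0 - b31 1 = 0" using J[of 2 1 1 2]
    by (simp add: dbl_bracket_def s3 E_def sl2_def brackets3_def v3_def)
  have z: "b12 2 = 0" "b23 0 = 0" "b31 1 = 0" using J4 J5 J6 by linarith+
  have y: "b12 0 = - b23 2" "b12 1 = - b31 2" "b23 1 = - b31 0" using J1 J2 J3 by linarith+
  have e1: "b12 = v3 (-b23 2) (-b31 2) 0"
  proof (intro ext)
    fix k :: 3 show "b12 k = v3 (-b23 2) (-b31 2) 0 k"
      using ex3[of k] z y unfolding v3_def by auto
  qed
  have e2: "b23 = v3 0 (-b31 0) (b23 2)"
  proof (intro ext)
    fix k :: 3 show "b23 k = v3 0 (-b31 0) (b23 2) k"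
      using ex3[of k] z y unfolding v3_def by auto
  qed
  have e3: "b31 = v3 (b31 0) 0 (b31 2)"
  proof (intro ext)
    fix k :: 3 show "b31 k = v3 (b31 0) 0 (b31 2) k"
      using ex3[of k] z unfolding v3_def by auto
  qed
  have "g 2 0 2 = b31 2" "g 1 2 2 = b23 2" "g 2 0 0 = b31 0"
    unfolding b31_def b23_def by simp_all
  then show ?thesis unfolding cob_def
    using gb e1 e2 e3 by (metis minus_minus)
qed



type_synonym mat3 = "3 \<Rightarrow> 3 \<Rightarrow> real"

definition mm :: "mat3 \<Rightarrow> mat3 \<Rightarrow> mat3" where
  "mm A B = (\<lambda>i j. \<Sum>k\<in>UNIV. A i k * B k j)"
definition tr :: "mat3 \<Rightarrow> mat3" where "tr A = (\<lambda>i j. A j i)"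
definition I3 :: mat3 where "I3 = (\<lambda>i j. if i = j then 1 else 0)"

definition SA :: "mat3 \<Rightarrow> sconst \<Rightarrow> sconst" where "SA A f = (\<lambda>i j n. \<Sum>k\<in>UNIV. A k i * f k j n)"
definition SB :: "mat3 \<Rightarrow> sconst \<Rightarrow> sconst" where "SB A f = (\<lambda>i j n. \<Sum>k\<in>UNIV. A k j * f i k n)"
definition SC :: "mat3 \<Rightarrow> sconst \<Rightarrow> sconst" where "SC A f = (\<lambda>i j n. \<Sum>k\<in>UNIV. f i j k * A n k)"

lemma tf_S: "trans_f A B f = SC B (SB A (SA A f))"
  unfolding trans_f_def SA_def SB_def SC_def by (intro ext) (simp add: s3 algebra_simps)
lemma tft_S: "trans_ft A B f = SC (tr A) (SB (tr B) (SA (tr B) f))"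
  unfolding trans_ft_def SA_def SB_def SC_def tr_def by (intro ext) (simp add: s3 algebra_simps)

lemma SAB: "SA A (SB C f) = SB C (SA A f)"
  unfolding SA_def SB_def by (intro ext) (simp add: s3 algebra_simps)
lemma SAC: "SA A (SC C f) = SC C (SA A f)"
  unfolding SA_def SC_def by (intro ext) (simp add: s3 algebra_simps)
lemma SBC: "SB A (SC C f) = SC C (SB A f)"
  unfolding SB_def SC_def by (intro ext) (simp add: s3 algebra_simps)
lemma SAA: "SA A2 (SA A1 f) = SA (mm A1 A2) f"
  unfolding SA_def mm_def by (intro ext) (simp add: s3 algebra_simps)
lemma SBB: "SB A2 (SB A1 f) = SB (mm A1 A2) f"
  unfolding SB_def mm_def by (intro ext) (simp add: s3 algebra_simps)
lemma SCC: "SC A2 (SC A1 f) = SC (mm A2 A1) f"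
  unfolding SC_def mm_def by (intro ext) (simp add: s3 algebra_simps)
lemma tr_mm: "tr (mm A B) = mm (tr B) (tr A)"
  unfolding tr_def mm_def by (intro ext) (simp add: mult.commute)
lemma tr_I: "tr I3 = I3" unfolding tr_def I3_def by (auto simp: fun_eq_iff)

lemma SA_I: "SA I3 f = f"
  unfolding SA_def I3_def by (intro ext) (simp add: if_distrib[of "\<lambda>z. z * _"] cong: if_cong)
lemma SB_I: "SB I3 f = f"
  unfolding SB_def I3_def by (intro ext) (simp add: if_distrib[of "\<lambda>z. z * _"] cong: if_cong)
lemma SC_I: "SC I3 f = f"
  unfolding SC_def I3_def by (intro ext) (simp add: if_distrib[of "\<lambda>z. _ * z"] cong: if_cong)

lemma tf_comp: "trans_f A2 B2 (trans_f A1 B1 f) = trans_f (mm A1 A2) (mm B2 B1) f"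
  unfolding tf_S by (simp add: SAB SAC SBC SAA SBB SCC)
lemma tft_comp: "trans_ft A2 B2 (trans_ft A1 B1 f) = trans_ft (mm A1 A2) (mm B2 B1) f"
  unfolding tft_S by (simp add: SAB SAC SBC SAA SBB SCC tr_mm)
lemma tf_I: "trans_f I3 I3 f = f" unfolding tf_S by (simp add: SA_I SB_I SC_I)
lemma tft_I: "trans_ft I3 I3 f = f" unfolding tft_S by (simp add: tr_I SA_I SB_I SC_I)

lemma mm_assoc: "mm (mm A B) C = mm A (mm B C)"
  unfolding mm_def by (intro ext) (simp add: s3 algebra_simps)
lemma mm_I1: "mm I3 A = A"
  unfolding mm_def I3_def by (intro ext) (simp add: if_distrib[of "\<lambda>z. z * _"] cong: if_cong)
lemma mm_I2: "mm A I3 = A"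
  unfolding mm_def I3_def by (intro ext) (simp add: if_distrib[of "\<lambda>z. _ * z"] cong: if_cong)

lemma ip_mm: "inverse_pair A B \<longleftrightarrow> mm A B = I3 \<and> mm B A = I3"
  unfolding inverse_pair_def mm_def I3_def by (auto simp: fun_eq_iff)

lemma ip_comp: "inverse_pair A1 B1 \<Longrightarrow> inverse_pair A2 B2 \<Longrightarrow> inverse_pair (mm A1 A2) (mm B2 B1)"
  unfolding ip_mm by (metis mm_assoc mm_I1 mm_I2)

lemma mt_iso_trans: "mt_iso f ft g gt \<Longrightarrow> mt_iso g gt h ht \<Longrightarrow> mt_iso f ft h ht"
  unfolding mt_iso_def by (metis ip_comp tf_comp tft_comp)

lemma mt_iso_sym: "mt_iso f ft g gt \<Longrightarrow> mt_iso g gt f ft"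
proof -
  assume "mt_iso f ft g gt"
  then obtain A B where ip: "inverse_pair A B" and "trans_f A B f = g" "trans_ft A B ft = gt"
    unfolding mt_iso_def by blast
  then have "trans_f B A g = f" "trans_ft B A gt = ft"
    using ip unfolding ip_mm by (auto simp: tf_comp tft_comp tf_I tft_I)
  then show ?thesis using ip unfolding mt_iso_def ip_mm by blast
qed



definition m3 :: "real \<Rightarrow> real \<Rightarrow> real \<Rightarrow> real \<Rightarrow> real \<Rightarrow> real \<Rightarrow> real \<Rightarrow> real \<Rightarrow> real \<Rightarrow> mat3" where
  "m3 a b c d e f g h k = (\<lambda>i j. v3 (v3 a b c j) (v3 d e f j) (v3 g h k j) i)"

lemma v3_simps[simp]: "v3 a b c 0 = a" "v3 a b c 1 = b" "v3 a b c 2 = c"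
  unfolding v3_def by simp_all

lemma rotL:
  assumes cs: "c^2 + s^2 = 1"
  shows "mt_iso sl2 (cob p0 p1 p2) sl2 (cob (c*p0+s*p1) (c*p1-s*p0) p2)"
  unfolding mt_iso_def
proof (intro exI conjI)
  let ?C = "m3 c (-s) 0 s c 0 0 0 1" and ?D = "m3 c s 0 (-s) c 0 0 0 1"
  show "inverse_pair ?C ?D"
    unfolding inverse_pair_def all3 m3_def using cs by (simp add: s3 power2_eq_square algebra_simps)
  show "trans_f ?C ?D sl2 = sl2"
    unfolding fun_eq_iff all3 m3_def using cs
    by (simp add: trans_f_def s3 sl2_def brackets3_def power2_eq_square algebra_simps)
  show "trans_ft ?C ?D (cob p0 p1 p2) = cob (c*p0+s*p1) (c*p1-s*p0) p2"
  proof -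
    have h1: "s*s = 1 - c*c" using cs by (simp add: power2_eq_square algebra_simps)
    have h2: "s*(s*x) = (1-c*c)*x" for x using h1 by (metis mult.assoc)
    show ?thesis unfolding fun_eq_iff all3 m3_def
      by (simp add: trans_ft_def s3 cob_def brackets3_def h1 h2 algebra_simps)
  qed
qed

lemma boostL:
  assumes cs: "ch^2 - sh^2 = 1"
  shows "mt_iso sl2 (cob p0 p1 p2) sl2 (cob (ch*p0 - sh*p2) p1 (ch*p2 - sh*p0))"
  unfolding mt_iso_def
proof -
  have h1: "sh*sh = ch*ch - 1" using cs by (simp add: power2_eq_square algebra_simps)
  have h2: "sh*(sh*x) = (ch*ch - 1)*x" for x using h1 by (metis mult.assoc)
  let ?C = "m3 ch 0 sh 0 1 0 sh 0 ch" and ?D = "m3 ch 0 (-sh) 0 1 0 (-sh) 0 ch"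
  have "inverse_pair ?C ?D"
    unfolding inverse_pair_def all3 m3_def by (simp add: s3 h1 h2 algebra_simps)
  moreover have "trans_f ?C ?D sl2 = sl2"
    unfolding fun_eq_iff all3 m3_def
    by (simp add: trans_f_def s3 sl2_def brackets3_def h1 h2 algebra_simps)
  moreover have "trans_ft ?C ?D (cob p0 p1 p2) = cob (ch*p0 - sh*p2) p1 (ch*p2 - sh*p0)"
    unfolding fun_eq_iff all3 m3_def
    by (simp add: trans_ft_def s3 cob_def brackets3_def h1 h2 algebra_simps)
  ultimately show "\<exists>A B. inverse_pair A B \<and> trans_f A B sl2 = sl2 \<and> trans_ft A B (cob p0 p1 p2) = cob (ch*p0 - sh*p2) p1 (ch*p2 - sh*p0)"
    by blast
qed

lemma flipL: "mt_iso sl2 (cob p0 p1 p2) sl2 (cob p0 (-p1) (-p2))"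
  unfolding mt_iso_def
proof -
  let ?C = "m3 1 0 0 0 (-1) 0 0 0 (-1)"
  have "inverse_pair ?C ?C"
    unfolding inverse_pair_def all3 m3_def by (simp add: s3)
  moreover have "trans_f ?C ?C sl2 = sl2"
    unfolding fun_eq_iff all3 m3_def
    by (simp add: trans_f_def s3 sl2_def brackets3_def)
  moreover have "trans_ft ?C ?C (cob p0 p1 p2) = cob p0 (-p1) (-p2)"
    unfolding fun_eq_iff all3 m3_def
    by (simp add: trans_ft_def s3 cob_def brackets3_def)
  ultimately show "\<exists>A B. inverse_pair A B \<and> trans_f A B sl2 = sl2 \<and> trans_ft A B (cob p0 p1 p2) = cob p0 (-p1) (-p2)"
    by blast
qed

lemma mt_iso_refl: "mt_iso f ft f ft"
  unfolding mt_iso_def using tf_I tft_I ip_mm mm_I1 by metis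

lemma cobI: "cob 0 0 0 = bianchiI"
  unfolding cob_def bianchiI_def brackets3_def v3_def by (intro ext) simp
lemma cobVi: "cob (-b) 0 0 = bianchiV_i b"
  unfolding cob_def bianchiV_i_def by simp
lemma cobVii: "cob 0 0 (-b) = bianchiV_ii b"
  unfolding cob_def bianchiV_ii_def by simp
lemma cobViii: "cob 1 0 (-1) = bianchiV_iii"
  unfolding cob_def bianchiV_iii_def by simp

lemma stepA: "\<exists>r\<ge>0. mt_iso sl2 (cob p0 p1 p2) sl2 (cob (-r) 0 p2)"
proof (cases "p0^2 + p1^2 = 0")
  case True
  then have "p0 = 0" "p1 = 0" by (simp_all add: sum_power2_eq_zero_iff)
  then show ?thesis using mt_iso_refl by (intro exI[of _ 0]) simp
next
  case False
  define r where "r = sqrt (p0^2 + p1^2)"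
  have rp: "r > 0" using False unfolding r_def
    by (metis add_nonneg_nonneg real_sqrt_gt_0_iff zero_le_power2 order_le_neq_trans)
  have r2: "r^2 = p0^2 + p1^2" unfolding r_def by simp
  have cs: "(-p0/r)^2 + (-p1/r)^2 = 1"
  proof -
    have "(-p0/r)^2 + (-p1/r)^2 = (p0^2 + p1^2)/r^2" by (simp add: power_divide add_divide_distrib)
    also have "\<dots> = r^2/r^2" using r2 by simp
    also have "\<dots> = 1" using rp by simp
    finally show ?thesis .
  qed
  have e1: "(-p0/r)*p0 + (-p1/r)*p1 = -r" using rp r2 by (simp add: field_simps power2_eq_square)
  have e2: "(-p0/r)*p1 - (-p1/r)*p0 = 0" by (simp add: field_simps)
  show ?thesis using rotL[OF cs, of p0 p1 p2] rp unfolding e1 e2 by (intro exI[of _ r]) simp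
qed

lemma stepC:
  assumes r: "r \<ge> 0" and s: "s \<ge> 0"
  shows "\<exists>ft. canonical_dual ft \<and> mt_iso sl2 (cob (-r) 0 (-s)) sl2 ft"
proof -
  consider "r = 0 \<and> s = 0" | "r > s" | "s > r" | "r = s \<and> r > 0" using r s by linarith
  then show ?thesis
  proof cases
    case 1 then show ?thesis using mt_iso_refl cobI unfolding canonical_dual_def by auto
  next
    case 2
    define b where "b = sqrt (r^2 - s^2)"
    have bp: "b > 0" using 2 r s unfolding b_def by (simp add: power_strict_mono)
    have b2: "b^2 = r^2 - s^2" unfolding b_def using 2 s by (simp add: power_mono)
    have cs: "(r/b)^2 - (s/b)^2 = 1"
    proof -
      have "(r/b)^2 - (s/b)^2 = (r^2 - s^2)/b^2" by (simp add: power_divide diff_divide_distrib)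
      also have "\<dots> = b^2/b^2" using b2 by simp
      also have "\<dots> = 1" using bp by simp
      finally show ?thesis .
    qed
    have e1: "r/b*(-r) - s/b*(-s) = -b" using bp b2 by (simp add: field_simps power2_eq_square)
    have e2: "r/b*(-s) - s/b*(-r) = 0" by (simp add: field_simps)
    have "mt_iso sl2 (cob (-r) 0 (-s)) sl2 (bianchiV_i b)"
      using boostL[OF cs, of "-r" 0 "-s"] unfolding e1 e2 cobVi by simp
    then show ?thesis using bp unfolding canonical_dual_def by blast
  next
    case 3
    define b where "b = sqrt (s^2 - r^2)"
    have bp: "b > 0" using 3 r s unfolding b_def by (simp add: power_strict_mono)
    have b2: "b^2 = s^2 - r^2" unfolding b_def using 3 r by (simp add: power_mono)
    have cs: "(s/b)^2 - (r/b)^2 = 1"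
    proof -
      have "(s/b)^2 - (r/b)^2 = (s^2 - r^2)/b^2" by (simp add: power_divide diff_divide_distrib)
      also have "\<dots> = b^2/b^2" using b2 by simp
      also have "\<dots> = 1" using bp by simp
      finally show ?thesis .
    qed
    have e1: "s/b*(-r) - r/b*(-s) = 0" by (simp add: field_simps)
    have e2: "s/b*(-s) - r/b*(-r) = -b" using bp b2 by (simp add: field_simps power2_eq_square)
    have "mt_iso sl2 (cob (-r) 0 (-s)) sl2 (bianchiV_ii b)"
      using boostL[OF cs, of "-r" 0 "-s"] unfolding e1 e2 cobVii by simp
    then show ?thesis using bp unfolding canonical_dual_def by blast
  next
    case 4
    then have rp: "r > 0" and rs: "s = r" by auto
    define ch where "ch = (r + 1/r)/2"
    define sh where "sh = (r - 1/r)/2"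
    have cs: "ch^2 - sh^2 = 1" unfolding ch_def sh_def using rp by (simp add: field_simps power2_eq_square)
    have e1: "ch*(-r) - sh*(-r) = -1" unfolding ch_def sh_def using rp by (simp add: field_simps)
    have m1: "mt_iso sl2 (cob (-r) 0 (-s)) sl2 (cob (-1) 0 (-1))"
      using boostL[OF cs, of "-r" 0 "-r"] unfolding rs e1 by simp
    have cs2: "(-1::real)^2 + 0^2 = 1" by simp
    have m2: "mt_iso sl2 (cob (-1) 0 (-1)) sl2 (cob 1 0 (-1))"
      using rotL[OF cs2, of "-1" 0 "-1"] by simp
    show ?thesis using mt_iso_trans[OF m1 m2] cobViii unfolding canonical_dual_def by auto
  qed
qed

lemma orbit: "\<exists>ft. canonical_dual ft \<and> mt_iso sl2 (cob p0 p1 p2) sl2 ft"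
proof -
  obtain r where r: "r \<ge> 0" and m1: "mt_iso sl2 (cob p0 p1 p2) sl2 (cob (-r) 0 p2)" using stepA by blast
  have m2: "mt_iso sl2 (cob p0 p1 p2) sl2 (cob (-r) 0 (- \<bar>p2\<bar>))"
  proof (cases "p2 \<ge> 0")
    case True then show ?thesis using mt_iso_trans[OF m1 flipL[of "-r" 0 p2]] by simp
  next
    case False then show ?thesis using m1 by simp
  qed
  obtain ft where "canonical_dual ft" "mt_iso sl2 (cob (-r) 0 (- \<bar>p2\<bar>)) sl2 ft"
    using stepC[OF r abs_ge_zero] by blast
  then show ?thesis using mt_iso_trans[OF m2] by blast
qed



definition tv :: "sconst \<Rightarrow> vec3" where "tv ft = (\<lambda>i. \<Sum>j\<in>UNIV. ft i j j)"
definition kil :: "sconst \<Rightarrow> mat3" where "kil f = (\<lambda>i j. \<Sum>a\<in>UNIV. \<Sum>b\<in>UNIV. f i a b * f j b a)"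

lemma tv_re: "tv (trans_ft A B ft) i = (\<Sum>k\<in>UNIV. B i k * (\<Sum>l\<in>UNIV. \<Sum>m\<in>UNIV. ft k l m * mm A B m l))"
  unfolding tv_def trans_ft_def mm_def by (simp add: s3 algebra_simps)

lemma tv_trans: "inverse_pair A B \<Longrightarrow> tv (trans_ft A B ft) i = (\<Sum>k\<in>UNIV. B i k * tv ft k)"
  unfolding tv_re ip_mm by (simp add: I3_def tv_def if_distrib[of "\<lambda>z. _ * z"] cong: if_cong)

lemma kil_SA: "kil (SA A f) i j = (\<Sum>k\<in>UNIV. \<Sum>l\<in>UNIV. A k i * A l j * kil f k l)"
  unfolding kil_def SA_def by (simp add: s3 algebra_simps)

lemma kil_re: "kil (SC B g) i j = (\<Sum>m\<in>UNIV. \<Sum>m'\<in>UNIV. (\<Sum>a\<in>UNIV. g i a m * B a m') * (\<Sum>b\<in>UNIV. g j b m' * B b m))"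
  unfolding kil_def SC_def by (simp add: s3 algebra_simps)

lemma SB_re: "(\<Sum>a\<in>UNIV. SB A h i a m * B a m') = (\<Sum>l\<in>UNIV. h i l m * mm A B l m')"
  unfolding SB_def mm_def by (simp add: s3 algebra_simps)

lemma kil_SCB: "mm A B = I3 \<Longrightarrow> kil (SC B (SB A h)) i j = kil h i j"
  unfolding kil_re SB_re apply (simp add: I3_def kil_def if_distrib[of "\<lambda>z. _ * z"] cong: if_cong)
  by (rule sum.swap)

lemma kil_trans: "inverse_pair A B \<Longrightarrow> kil (trans_f A B f) i j = (\<Sum>k\<in>UNIV. \<Sum>l\<in>UNIV. A k i * A l j * kil f k l)"
  unfolding tf_S ip_mm by (simp add: kil_SCB kil_SA)

lemma Q_re: fixes C K :: mat3 and u :: vec3 shows "(\<Sum>i\<in>UNIV. \<Sum>j\<in>UNIV. (\<Sum>k\<in>UNIV. \<Sum>l\<in>UNIV. C k i * C l j * K k l) * u i * u j)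
   = (\<Sum>k\<in>UNIV. \<Sum>l\<in>UNIV. K k l * (\<Sum>i\<in>UNIV. C k i * u i) * (\<Sum>j\<in>UNIV. C l j * (u j::real)))"
  by (simp add: s3 algebra_simps)

definition Qf :: "mat3 \<Rightarrow> vec3 \<Rightarrow> real" where "Qf K u = (\<Sum>i\<in>UNIV. \<Sum>j\<in>UNIV. K i j * u i * u j)"

lemma Q_inv:
  assumes ip: "inverse_pair C D" and f: "trans_f C D f = f" and g: "trans_ft C D ft1 = ft2"
  shows "Qf (kil f) (tv ft2) = Qf (kil f) (tv ft1)"
proof -
  have k: "kil f i j = (\<Sum>k\<in>UNIV. \<Sum>l\<in>UNIV. C k i * C l j * kil f k l)" for i j
    using kil_trans[OF ip, of f i j] unfolding f .
  have t: "tv ft2 i = (\<Sum>k\<in>UNIV. D i k * tv ft1 k)" for i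
    using tv_trans[OF ip, of ft1 i] unfolding g .
  have ct: "(\<Sum>i\<in>UNIV. C k i * tv ft2 i) = tv ft1 k" for k
  proof -
    have cd: "(\<Sum>i\<in>UNIV. C k i * D i m) = (if k = m then 1 else 0)" for m
      using ip unfolding inverse_pair_def by simp
    show ?thesis unfolding t rearr1 cd by (simp add: if_distrib[of "\<lambda>z. z * _"] cong: if_cong)
  qed
  have "Qf (kil f) (tv ft2) = (\<Sum>i\<in>UNIV. \<Sum>j\<in>UNIV. (\<Sum>k\<in>UNIV. \<Sum>l\<in>UNIV. C k i * C l j * kil f k l) * tv ft2 i * tv ft2 j)"
    unfolding Qf_def
  proof (intro sum.cong refl)
    fix i j show "kil f i j * tv ft2 i * tv ft2 j = (\<Sum>k\<in>UNIV. \<Sum>l\<in>UNIV. C k i * C l j * kil f k l) * tv ft2 i * tv ft2 j"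
      by (simp only: k[of i j])
  qed
  also have "\<dots> = Qf (kil f) (tv ft1)" unfolding Q_re ct Qf_def ..
  finally show ?thesis .
qed

lemma tv_zero:
  assumes ip: "inverse_pair C D" and g: "trans_ft C D ft1 = ft2" and z: "tv ft1 = 0"
  shows "tv ft2 = 0"
proof
  fix i show "tv ft2 i = 0 i" using tv_trans[OF ip, of ft1 i] g z by simp
qed

lemma tv_cob0: "tv (cob p0 p1 p2) 0 = 2*p0" "tv (cob p0 p1 p2) 1 = 2*p1" "tv (cob p0 p1 p2) 2 = 2*p2"
  by (simp_all add: tv_def s3 cob_def brackets3_def)
lemma kil_sl2: "kil sl2 = m3 2 0 0 0 2 0 0 0 (-2)"
  unfolding fun_eq_iff all3 by (simp add: kil_def s3 sl2_def brackets3_def m3_def)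

lemma tv_cob: "tv (cob p0 p1 p2) = v3 (2*p0) (2*p1) (2*p2)"
proof (intro ext)
  fix i :: 3 show "tv (cob p0 p1 p2) i = v3 (2*p0) (2*p1) (2*p2) i"
    using ex3[of i] tv_cob0 by auto
qed

lemma Q_sl2: "Qf (kil sl2) (v3 a b c) = 2*a^2 + 2*b^2 - 2*c^2"
  unfolding kil_sl2 Qf_def by (simp add: s3 m3_def power2_eq_square)

lemma cob_invariants:
  assumes "mt_iso sl2 (cob p0 p1 p2) sl2 (cob q0 q1 q2)"
  shows "p0^2 + p1^2 - p2^2 = q0^2 + q1^2 - q2^2" and "p0 = 0 \<and> p1 = 0 \<and> p2 = 0 \<Longrightarrow> q0 = 0 \<and> q1 = 0 \<and> q2 = 0"
proof -
  obtain C D where ip: "inverse_pair C D" and f: "trans_f C D sl2 = sl2" and g: "trans_ft C D (cob p0 p1 p2) = cob q0 q1 q2"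
    using assms unfolding mt_iso_def by blast
  have "Qf (kil sl2) (tv (cob q0 q1 q2)) = Qf (kil sl2) (tv (cob p0 p1 p2))" using Q_inv[OF ip f g] .
  then show "p0^2 + p1^2 - p2^2 = q0^2 + q1^2 - q2^2" unfolding tv_cob Q_sl2 by (simp add: power_mult_distrib)
  assume "p0 = 0 \<and> p1 = 0 \<and> p2 = 0"
  then have "tv (cob p0 p1 p2) = 0" unfolding tv_cob by (auto simp: v3_def)
  then have "tv (cob q0 q1 q2) = 0" using tv_zero[OF ip g] by blast
  then have "v3 (2*q0) (2*q1) (2*q2) = 0" unfolding tv_cob .
  then have "v3 (2*q0) (2*q1) (2*q2) 0 = 0" "v3 (2*q0) (2*q1) (2*q2) 1 = 0" "v3 (2*q0) (2*q1) (2*q2) 2 = 0"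
    by simp_all
  then show "q0 = 0 \<and> q1 = 0 \<and> q2 = 0" by simp
qed



lemma canon_cob: "canonical_dual ft \<Longrightarrow> \<exists>p0 p1 p2. ft = cob p0 p1 p2 \<and>
   ((p0 = 0 \<and> p1 = 0 \<and> p2 = 0) \<or> (p0 < 0 \<and> p1 = 0 \<and> p2 = 0) \<or> (p0 = 0 \<and> p1 = 0 \<and> p2 < 0) \<or> (p0 = 1 \<and> p1 = 0 \<and> p2 = -1))"
  unfolding canonical_dual_def
  apply (elim disjE exE conjE)
     apply (rule exI[of _ 0], rule exI[of _ 0], rule exI[of _ 0], simp add: cobI)
    apply (rule_tac x="-b" in exI, rule exI[of _ 0], rule exI[of _ 0], simp add: cobVi)
   apply (rule exI[of _ 0], rule exI[of _ 0], rule_tac x="-b" in exI, simp add: cobVii)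
  apply (rule exI[of _ 1], rule exI[of _ 0], rule exI[of _ "-1"], simp add: cobViii)
  done

lemma sq_eq_neg: "x*x = y*y \<Longrightarrow> x < 0 \<Longrightarrow> y < 0 \<Longrightarrow> x = (y::real)"
  by (smt (verit) mult_strict_left_mono_neg mult_strict_right_mono_neg)

lemma canon_unique:
  assumes c1: "canonical_dual ft1" and c2: "canonical_dual ft2" and m: "mt_iso sl2 ft1 sl2 ft2"
  shows "ft1 = ft2"
proof -
  obtain p0 p1 p2 where e1: "ft1 = cob p0 p1 p2" and d1: "((p0 = 0 \<and> p1 = 0 \<and> p2 = 0) \<or> (p0 < 0 \<and> p1 = 0 \<and> p2 = 0) \<or> (p0 = 0 \<and> p1 = 0 \<and> p2 < 0) \<or> (p0 = 1 \<and> p1 = 0 \<and> p2 = -1))"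
    using canon_cob[OF c1] by blast
  obtain q0 q1 q2 where e2: "ft2 = cob q0 q1 q2" and d2: "((q0 = 0 \<and> q1 = 0 \<and> q2 = 0) \<or> (q0 < 0 \<and> q1 = 0 \<and> q2 = 0) \<or> (q0 = 0 \<and> q1 = 0 \<and> q2 < 0) \<or> (q0 = 1 \<and> q1 = 0 \<and> q2 = -1))"
    using canon_cob[OF c2] by blast
  have m': "mt_iso sl2 (cob p0 p1 p2) sl2 (cob q0 q1 q2)" using m e1 e2 by simp
  have Q: "p0^2 + p1^2 - p2^2 = q0^2 + q1^2 - q2^2" using cob_invariants(1)[OF m'] .
  have Z1: "p0 = 0 \<and> p1 = 0 \<and> p2 = 0 \<Longrightarrow> q0 = 0 \<and> q1 = 0 \<and> q2 = 0" using cob_invariants(2)[OF m'] .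
  have Z2: "q0 = 0 \<and> q1 = 0 \<and> q2 = 0 \<Longrightarrow> p0 = 0 \<and> p1 = 0 \<and> p2 = 0" using cob_invariants(2)[OF mt_iso_sym[OF m']] .
  have "p0 = q0 \<and> p1 = q1 \<and> p2 = q2"
    using d1 d2 Q Z1 Z2
    apply (elim disjE conjE)
    apply (simp_all add: power2_eq_square)
    using sq_eq_neg apply blast
    apply (smt (verit) mult_neg_neg)
    apply (smt (verit) mult_neg_neg)
    using sq_eq_neg apply blast
    done
  then show ?thesis using e1 e2 by simp
qed

theorem mainTheorem2:
  fixes f' ft' :: sconst
  assumes "manin_triple f' ft'"
    and "lie_iso f' sl2"
  shows "\<exists>!ft. canonical_dual ft \<and> mt_iso f' ft' sl2 ft"
proof -
  obtain A0 B0 where ip: "inverse_pair A0 B0" and f0: "trans_f A0 B0 f' = sl2"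
    using assms(2) unfolding lie_iso_def by blast
  define g0 where "g0 = trans_ft A0 B0 ft'"
  have m1: "mt_iso f' ft' sl2 g0" unfolding mt_iso_def g0_def using ip f0 by blast
  have "manin_triple sl2 g0" using mt_transfer[OF assms(1) ip] unfolding f0 g0_def .
  then have "g0 = cob (- g0 2 0 2) (g0 1 2 2) (g0 2 0 0)" by (rule cocycle)
  then obtain ft where c: "canonical_dual ft" and m2: "mt_iso sl2 g0 sl2 ft"
    using orbit by metis
  show ?thesis
  proof (rule ex1I[of _ ft])
    show "canonical_dual ft \<and> mt_iso f' ft' sl2 ft" using c mt_iso_trans[OF m1 m2] by blast
  next
    fix ft2 assume "canonical_dual ft2 \<and> mt_iso f' ft' sl2 ft2"
    then have c2: "canonical_dual ft2" and m3: "mt_iso f' ft' sl2 ft2" by auto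
    have "mt_iso sl2 ft2 sl2 ft" using mt_iso_trans[OF mt_iso_sym[OF m3] mt_iso_trans[OF m1 m2]] .
    then show "ft2 = ft" using canon_unique c c2 by blast
  qed
qed

end
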